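(* Fix positive integers $n$ and $k$. Among all sequences $(a_1,\dots,a_k)$ of positive integers with $\sum_{i=1}^k a_i=n$ that arise as the sequence of step sizes in the construction of some $k$-atom on $n$ vertices, every sequence minimizing $\sum_{1\le i<j\le k}\sqrt{a_i/a_j}$ is non-decreasing.
   Context: $k$-atoms are built recursively in $k$ steps: step $1$ creates a single vertex ($K_1$, the only $1$-atom). At step $i+1$, from an $i$-atom $A_i$ one obtains an $(i+1)$-atom by adding a new independent set $I$ such that each vertex of $A_i$ has exactly one neighbor in $I$ and each vertex of $I$ has at least one neighbor in $A_i$. The step sizes are $a_1=1$ and $a_{i+1}=|I|$ for the set added at step $i+1$, so that $\sum_i a_i$ is the number of vertices of the resulting $k$-atom. *)

theory Defs
  imports Complex_Main
begin

text \<open>A graph is given by a finite vertex set V :: nat set and a set E of edges,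
each edge a two-element set {u,w}.  katom V E as means: (V,E) is a
(length as)-atom built with step sizes as = [a_1,...,a_k].\<close>

inductive katom :: "nat set \<Rightarrow> nat set set \<Rightarrow> nat list \<Rightarrow> bool" where
  base: "katom {v} {} [1]"
| step: "\<lbrakk> katom V E as; finite I; I \<inter> V = {};
           F \<subseteq> {{u, w} | u w. u \<in> V \<and> w \<in> I};
           \<forall>u\<in>V. \<exists>!w. w \<in> I \<and> {u, w} \<in> F;
           \<forall>w\<in>I. \<exists>u\<in>V. {u, w} \<in> F \<rbrakk>
         \<Longrightarrow> katom (V \<union> I) (E \<union> F) (as @ [card I])"

definition atom_cost :: "nat list \<Rightarrow> real" where
  "atom_cost as = (\<Sum>j<length as. \<Sum>i<j. sqrt (real (as ! i) / real (as ! j)))"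

definition realizable_steps :: "nat \<Rightarrow> nat \<Rightarrow> nat list set" where
  "realizable_steps n k = {as. length as = k \<and> (\<forall>a\<in>set as. 0 < a) \<and> sum_list as = n \<and>
       (\<exists>V E. katom V E as \<and> card V = n)}"

end

theory Submission
  imports Defs
begin

fun ext :: "nat \<Rightarrow> nat list \<Rightarrow> bool" where
  "ext s [] = True"
| "ext s (a # ys) = (0 < a \<and> a \<le> s \<and> ext (s + a) ys)"

lemma ext_append: "ext s (xs @ ys) = (ext s xs \<and> ext (s + sum_list xs) ys)"
  by (induction xs arbitrary: s) (auto simp: add.assoc)

definition valid :: "nat list \<Rightarrow> bool" where
  "valid as = (\<exists>ys. as = 1 # ys \<and> ext 1 ys)"

lemma katom_valid:
  assumes "katom V E as"
  shows "valid as \<and> card V = sum_list as \<and> finite V"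
  using assms
proof (induction rule: katom.induct)
  case base
  then show ?case by (simp add: valid_def)
next
  case (step V E as I F)
  from step.IH obtain ys where ys: "as = 1 # ys" "ext 1 ys" by (auto simp: valid_def)
  have cV: "card V = sum_list as" and fV: "finite V" using step.IH by auto
  define g where "g u = (THE w. w \<in> I \<and> {u, w} \<in> F)" for u
  have "I \<subseteq> g ` V"
  proof
    fix w assume w: "w \<in> I"
    then obtain u where u: "u \<in> V" "{u, w} \<in> F" using step.hyps(6) by blast
    have "g u = w" unfolding g_def
      using step.hyps(5) u w by (metis (no_types, lifting) the_equality)
    then show "w \<in> g ` V" using u by blast
  qed
  hence le: "card I \<le> card V"
    by (meson card_image_le card_mono fV finite_imageI le_trans)
  have "V \<noteq> {}" using cV ys by auto
  then obtain u where "u \<in> V" by blast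
  then obtain w where "w \<in> I" using step.hyps(5) by blast
  hence pos: "0 < card I" using step.hyps(2) card_gt_0_iff by blast
  have "ext 1 (ys @ [card I])"
    using ys le pos cV by (simp add: ext_append)
  hence "valid (as @ [card I])" using ys by (simp add: valid_def)
  moreover have "card (V \<union> I) = card V + card I"
    using card_Un_disjoint fV step.hyps(2,3) by blast
  ultimately show ?case using cV fV step.hyps(2) by simp
qed

lemma ext_katom:
  assumes "ext 1 ys"
  shows "\<exists>E. katom {0..<1 + sum_list ys} E (1 # ys)"
  using assms
proof (induction ys rule: rev_induct)
  case Nil
  have "katom {0} {} [1]" by (rule katom.base)
  then show ?case by auto
next
  case (snoc a ys)
  define s where "s = 1 + sum_list ys"
  from snoc.prems have e: "ext 1 ys" and a: "0 < a" "a \<le> s"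
    by (auto simp: ext_append s_def)
  from snoc.IH[OF e] obtain E where E: "katom {0..<s} E (1 # ys)" by (auto simp: s_def)
  define I where "I = {s..<s+a}"
  define h where "h u = s + (if u < a then u else 0)" for u
  define F where "F = (\<lambda>u. {u, h u}) ` {0..<s}"
  have "katom ({0..<s} \<union> I) (E \<union> F) ((1 # ys) @ [card I])"
  proof (rule katom.step[OF E])
    show "finite I" by (simp add: I_def)
    show "I \<inter> {0..<s} = {}" by (auto simp: I_def)
    show "F \<subseteq> {{u, w} | u w. u \<in> {0..<s} \<and> w \<in> I}"
    proof
      fix e assume "e \<in> F"
      then obtain u where u: "u < s" "e = {u, h u}" by (auto simp: F_def)
      have "h u \<in> I" using u a by (auto simp: I_def h_def)
      then show "e \<in> {{u, w} | u w. u \<in> {0..<s} \<and> w \<in> I}" using u by auto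
    qed
    show "\<forall>u\<in>{0..<s}. \<exists>!w. w \<in> I \<and> {u, w} \<in> F"
    proof
      fix u assume u: "u \<in> {0..<s}"
      have 1: "h u \<in> I \<and> {u, h u} \<in> F" using u a by (auto simp: F_def I_def h_def)
      have 2: "w = h u" if "w \<in> I" "{u, w} \<in> F" for w
      proof -
        from that obtain u' where u': "u' < s" "{u, w} = {u', h u'}" by (auto simp: F_def)
        have "w \<ge> s" "u < s" "h u' \<ge> s" using that u by (auto simp: I_def h_def)
        with u' show ?thesis by (metis doubleton_eq_iff not_le)
      qed
      show "\<exists>!w. w \<in> I \<and> {u, w} \<in> F" using 1 2 by blast
    qed
    show "\<forall>w\<in>I. \<exists>u\<in>{0..<s}. {u, w} \<in> F"
    proof
      fix w assume "w \<in> I"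
      then have "w - s < a" "w - s < s" "w = h (w - s)" using a by (auto simp: I_def h_def)
      then show "\<exists>u\<in>{0..<s}. {u, w} \<in> F" unfolding F_def by force
    qed
  qed
  moreover have "{0..<s} \<union> I = {0..<1 + sum_list (ys @ [a])}"
    by (auto simp: I_def s_def)
  moreover have "card I = a" by (simp add: I_def)
  ultimately show ?case by auto
qed

definition f :: "nat \<Rightarrow> nat \<Rightarrow> real" where
  "f p q = sqrt (real p / real q)"

definition cross :: "nat list \<Rightarrow> nat list \<Rightarrow> real" where
  "cross xs ys = (\<Sum>p\<leftarrow>xs. \<Sum>q\<leftarrow>ys. f p q)"

lemma cost_snoc: "atom_cost (as @ [a]) = atom_cost as + (\<Sum>b\<leftarrow>as. f b a)"
proof -
  have "atom_cost (as @ [a]) = (\<Sum>j<length as. \<Sum>i<j. sqrt (real ((as@[a]) ! i) / real ((as@[a]) ! j)))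
      + (\<Sum>i<length as. sqrt (real ((as@[a]) ! i) / real a))"
    unfolding atom_cost_def by (simp add: nth_append)
  also have "(\<Sum>j<length as. \<Sum>i<j. sqrt (real ((as@[a]) ! i) / real ((as@[a]) ! j)))
      = atom_cost as"
    unfolding atom_cost_def
    by (intro sum.cong refl) (simp add: nth_append)
  also have "(\<Sum>i<length as. sqrt (real ((as@[a]) ! i) / real a)) = (\<Sum>i<length as. f (as ! i) a)"
    by (intro sum.cong refl) (simp add: nth_append f_def)
  also have "\<dots> = (\<Sum>b\<leftarrow>as. f b a)"
    by (simp add: sum_list_sum_nth atLeast0LessThan)
  finally show ?thesis .
qed

lemma cost_append: "atom_cost (xs @ ys) = atom_cost xs + atom_cost ys + cross xs ys"
proof (induction ys rule: rev_induct)
  case Nil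
  then show ?case by (simp add: atom_cost_def cross_def)
next
  case (snoc a ys)
  have "atom_cost (xs @ ys @ [a]) = atom_cost (xs @ ys) + (\<Sum>b\<leftarrow>xs @ ys. f b a)"
    using cost_snoc[of "xs @ ys" a] by simp
  moreover have "cross xs (ys @ [a]) = cross xs ys + (\<Sum>b\<leftarrow>xs. f b a)"
    by (simp add: cross_def sum_list_addf)
  ultimately show ?case using snoc cost_snoc[of ys a] by simp
qed

lemma cost_two: "atom_cost [x, y] = f x y"
  by (simp add: atom_cost_def f_def lessThan_Suc)

lemma cross_sym1: "cross xs [x, y] = cross xs [y, x]"
  by (simp add: cross_def add.commute)

lemma cross_sym2: "cross [x, y] zs = cross [y, x] zs"
  by (simp add: cross_def)

lemma cost_swap:
  "atom_cost (xs @ [x, y] @ zs) - atom_cost (xs @ [y, x] @ zs) = f x y - f y x"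
proof -
  have a: "atom_cost (xs @ [x, y] @ zs) = atom_cost xs + (f x y + atom_cost zs + cross [x, y] zs) + cross xs ([x, y] @ zs)"
    using cost_append[of xs "[x,y] @ zs"] cost_append[of "[x,y]" zs] cost_two[of x y] by simp
  have b: "atom_cost (xs @ [y, x] @ zs) = atom_cost xs + (f y x + atom_cost zs + cross [y, x] zs) + cross xs ([y, x] @ zs)"
    using cost_append[of xs "[y,x] @ zs"] cost_append[of "[y,x]" zs] cost_two[of y x] by simp
  have c: "cross xs ([x, y] @ zs) = cross xs ([y, x] @ zs)"
    unfolding cross_def by (simp add: add.commute add.left_commute)
  show ?thesis using a b c cross_sym2[of x y zs] by simp
qed

lemma f_less: assumes "0 < y" "y < x" shows "f y x < f x y"
proof -
  have "real y / real x < real x / real y"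
    using assms by (simp add: divide_simps power2_eq_square[symmetric] power_strict_mono)
  then show ?thesis by (simp add: f_def)
qed

theorem lemma4:
  fixes n k :: nat and as :: "nat list"
  assumes "0 < n" and "0 < k"
    and "as \<in> realizable_steps n k"
    and "\<forall>bs \<in> realizable_steps n k. atom_cost as \<le> atom_cost bs"
  shows "sorted as"
proof (rule ccontr)
  assume ns: "\<not> sorted as"
  then obtain i where i: "Suc i < length as" "as ! Suc i < as ! i"
    by (metis not_le sorted_iff_nth_Suc)
  from assms(3) obtain V E where r: "length as = k" "sum_list as = n" "katom V E as" "card V = n"
    by (auto simp: realizable_steps_def)
  have va: "valid as" using katom_valid[OF r(3)] by simp
  define xs where "xs = take i as"
  define x where "x = as ! i"
  define y where "y = as ! Suc i"
  define zs where "zs = drop (Suc (Suc i)) as"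
  have dec: "as = xs @ [x, y] @ zs"
    unfolding xs_def x_def y_def zs_def using i(1)
    by (metis Cons_nth_drop_Suc Suc_lessD append_Cons append_self_conv2 append_take_drop_id)
  from va obtain ys where ys: "as = 1 # ys" "ext 1 ys" by (auto simp: valid_def)
  have xy: "y < x" using i by (simp add: x_def y_def)
  have "xs \<noteq> []"
  proof
    assume "xs = []"
    then have "x = 1" "ys = y # zs" using dec ys by auto
    then show False using ys xy by auto
  qed
  then obtain xs' where xs': "xs = 1 # xs'" using dec ys by (cases xs) auto
  have ysd: "ys = xs' @ [x, y] @ zs" using dec ys xs' by simp
  define s where "s = 1 + sum_list xs'"
  have e: "ext 1 xs'" "0 < x" "x \<le> s" "0 < y" "y \<le> s + x" "ext (s + x + y) zs"
    using ys(2) unfolding ysd by (auto simp: ext_append s_def add.assoc)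
  define bs where "bs = xs @ [y, x] @ zs"
  have sxy: "s + y + x = s + x + y" by simp
  have "ext (s + y + x) zs" unfolding sxy by (rule e(6))
  have "ext s [y, x]" using e xy by simp
  moreover have "s + sum_list [y, x] = s + y + x" by simp
  ultimately have "ext s ([y, x] @ zs)" using \<open>ext (s + y + x) zs\<close>
    by (simp only: ext_append)
  hence "ext 1 (xs' @ [y, x] @ zs)"
    using e(1) by (simp only: ext_append s_def)
  hence vb: "valid bs" by (simp add: valid_def bs_def xs')
  obtain E' where E': "katom {0..<1 + sum_list (xs' @ [y, x] @ zs)} E' bs"
    using ext_katom[OF \<open>ext 1 (xs' @ [y, x] @ zs)\<close>] by (auto simp: bs_def xs')
  have sb: "sum_list bs = n" using r(2) dec by (simp add: bs_def)
  have lb: "length bs = k" using r(1) dec by (simp add: bs_def)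
  have "\<forall>a\<in>set bs. 0 < a"
    using assms(3) dec unfolding bs_def realizable_steps_def by auto
  have "bs \<in> realizable_steps n k"
    unfolding realizable_steps_def
    using lb sb E' \<open>\<forall>a\<in>set bs. 0 < a\<close> by (auto simp: bs_def xs' intro!: exI[of _ E'])
  with assms(4) have "atom_cost as \<le> atom_cost bs" by blast
  moreover have "atom_cost as - atom_cost bs = f x y - f y x"
    using cost_swap dec bs_def by simp
  moreover have "f y x < f x y" using f_less e xy by simp
  ultimately show False by simp
qed

end
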